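(* For every graph $G$ and every $c\in[\frac12,1)$, $\mathrm{bn}(G)\le \frac{1}{1-c}\,\mathrm{sep}^*_c(G)$.
   Context: Two subgraphs $A,B$ of $G$ touch if they share a vertex or some edge of $G$ has one endpoint in $A$ and the other in $B$. A bramble is a set of connected subgraphs of $G$ that pairwise touch; a hitting set of a bramble is a set of vertices meeting every element; the order of a bramble is the minimum size of a hitting set; the bramble number $\mathrm{bn}(G)$ is the maximum order of a bramble in $G$. For $S\subseteq V(G)$ and $c\in[\frac12,1)$, a $(k,S,c)^*$-separator is a set $X\subseteq V(G)$ with $|X|\le k$ such that no component of $G-X$ contains more than $c|S|$ vertices of $S\setminus X$. $\mathrm{sep}^*_c(G)$ is the minimum integer $k$ such that $G$ has a $(k,S,c)^*$-separator for every $S\subseteq V(G)$. *)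

theory Defs
  imports Complex_Main
begin

definition graph :: "'a set \<Rightarrow> 'a set set \<Rightarrow> bool" where
  "graph V E \<longleftrightarrow> finite V \<and> (\<forall>e\<in>E. \<exists>u v. e = {u, v} \<and> u \<noteq> v \<and> u \<in> V \<and> v \<in> V)"

definition subgraph :: "'a set \<Rightarrow> 'a set set \<Rightarrow> 'a set \<Rightarrow> 'a set set \<Rightarrow> bool" where
  "subgraph VH EH V E \<longleftrightarrow> VH \<subseteq> V \<and> EH \<subseteq> E \<and> (\<forall>e\<in>EH. e \<subseteq> VH)"

definition connected_graph :: "'a set \<Rightarrow> 'a set set \<Rightarrow> bool" where
  "connected_graph V E \<longleftrightarrow> V \<noteq> {} \<and>
     (\<forall>u\<in>V. \<forall>v\<in>V. (\<lambda>x y. {x, y} \<in> E)\<^sup>*\<^sup>* u v)"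

definition touch :: "'a set set \<Rightarrow> 'a set \<times> 'a set set \<Rightarrow> 'a set \<times> 'a set set \<Rightarrow> bool" where
  "touch E A B \<longleftrightarrow> fst A \<inter> fst B \<noteq> {} \<or> (\<exists>a\<in>fst A. \<exists>b\<in>fst B. {a, b} \<in> E)"

definition bramble :: "'a set \<Rightarrow> 'a set set \<Rightarrow> ('a set \<times> 'a set set) set \<Rightarrow> bool" where
  "bramble V E \<B> \<longleftrightarrow>
     (\<forall>H\<in>\<B>. subgraph (fst H) (snd H) V E \<and> connected_graph (fst H) (snd H)) \<and>
     (\<forall>A\<in>\<B>. \<forall>B\<in>\<B>. touch E A B)"

definition hitting_set :: "'a set \<Rightarrow> ('a set \<times> 'a set set) set \<Rightarrow> 'a set \<Rightarrow> bool" where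
  "hitting_set V \<B> X \<longleftrightarrow> X \<subseteq> V \<and> (\<forall>H\<in>\<B>. X \<inter> fst H \<noteq> {})"

definition bramble_order :: "'a set \<Rightarrow> ('a set \<times> 'a set set) set \<Rightarrow> nat" where
  "bramble_order V \<B> = Min {card X | X. hitting_set V \<B> X}"

definition bramble_number :: "'a set \<Rightarrow> 'a set set \<Rightarrow> nat" where
  "bramble_number V E = Max {bramble_order V \<B> | \<B>. bramble V E \<B>}"

definition reach_minus :: "'a set \<Rightarrow> 'a set set \<Rightarrow> 'a set \<Rightarrow> 'a \<Rightarrow> 'a \<Rightarrow> bool" where
  "reach_minus V E X = (\<lambda>x y. x \<in> V - X \<and> y \<in> V - X \<and> {x, y} \<in> E)\<^sup>*\<^sup>*"

definition component_minus :: "'a set \<Rightarrow> 'a set set \<Rightarrow> 'a set \<Rightarrow> 'a \<Rightarrow> 'a set" where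
  "component_minus V E X v = {u. reach_minus V E X v u}"

definition star_separator :: "'a set \<Rightarrow> 'a set set \<Rightarrow> nat \<Rightarrow> 'a set \<Rightarrow> real \<Rightarrow> 'a set \<Rightarrow> bool" where
  "star_separator V E k S c X \<longleftrightarrow> X \<subseteq> V \<and> card X \<le> k \<and>
     (\<forall>v\<in>V - X. real (card (component_minus V E X v \<inter> (S - X))) \<le> c * real (card S))"

definition sep_star :: "'a set \<Rightarrow> 'a set set \<Rightarrow> real \<Rightarrow> nat" where
  "sep_star V E c = (LEAST k. \<forall>S. S \<subseteq> V \<longrightarrow> (\<exists>X. star_separator V E k S c X))"

end

theory Submission
  imports Defs
begin

lemma E_sub: "graph V E \<Longrightarrow> E \<subseteq> Pow V"
proof
  fix e assume g: "graph V E" and e: "e \<in> E"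
  then obtain u v where "e = {u, v}" "u \<in> V" "v \<in> V" unfolding graph_def by blast
  thus "e \<in> Pow V" by simp
qed

lemma finite_brambles:
  assumes "graph V E"
  shows "finite {B. bramble V E B}"
proof -
  have fV: "finite V" using assms unfolding graph_def by blast
  have fE: "finite E" using E_sub[OF assms] fV by (meson finite_Pow_iff finite_subset)
  have "{B. bramble V E B} \<subseteq> Pow (Pow V \<times> Pow E)"
  proof
    fix B assume "B \<in> {B. bramble V E B}"
    hence h: "\<And>H. H \<in> B \<Longrightarrow> fst H \<subseteq> V \<and> snd H \<subseteq> E"
      unfolding bramble_def subgraph_def by blast
    show "B \<in> Pow (Pow V \<times> Pow E)"
    proof (rule PowI, rule subsetI)
      fix H assume "H \<in> B"
      from h[OF this] show "H \<in> Pow V \<times> Pow E" by (cases H) simp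
    qed
  qed
  moreover have "finite (Pow (Pow V \<times> Pow E))" using fV fE by simp
  ultimately show ?thesis by (rule finite_subset)
qed

lemma bn_attained:
  assumes "graph V E"
  shows "\<exists>B. bramble V E B \<and> bramble_number V E = bramble_order V B"
proof -
  have eq: "{bramble_order V \<B> | \<B>. bramble V E \<B>} = bramble_order V ` {B. bramble V E B}" by auto
  have "finite {bramble_order V \<B> | \<B>. bramble V E \<B>}"
    unfolding eq using finite_brambles[OF assms] by simp
  moreover have "bramble V E {}" unfolding bramble_def by simp
  hence "{bramble_order V \<B> | \<B>. bramble V E \<B>} \<noteq> {}" by blast
  ultimately have "bramble_number V E \<in> {bramble_order V \<B> | \<B>. bramble V E \<B>}"
    unfolding bramble_number_def by (rule Max_in)
  thus ?thesis by auto
qed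

lemma hit_finite:
  assumes "finite V"
  shows "finite {card X | X. hitting_set V B X}"
proof -
  have "{card X | X. hitting_set V B X} \<subseteq> {0..card V}"
    unfolding hitting_set_def using assms by (auto intro: card_mono)
  thus ?thesis by (rule finite_subset) simp
qed

lemma order_attained:
  assumes "finite V" "bramble V E B"
  shows "\<exists>S. hitting_set V B S \<and> card S = bramble_order V B"
proof -
  have "hitting_set V B V" using assms(2) unfolding hitting_set_def bramble_def
      subgraph_def connected_graph_def by blast
  hence ne: "{card X | X. hitting_set V B X} \<noteq> {}" by blast
  have "bramble_order V B \<in> {card X | X. hitting_set V B X}"
    unfolding bramble_order_def using Min_in[OF hit_finite[OF assms(1)] ne] .
  thus ?thesis by auto
qed

lemma order_le:
  assumes "finite V" "hitting_set V B Y"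
  shows "bramble_order V B \<le> card Y"
  unfolding bramble_order_def using Min_le[OF hit_finite[OF assms(1)]] assms(2) by blast

lemma sep_star_prop:
  assumes "finite V"
  shows "\<forall>S. S \<subseteq> V \<longrightarrow> (\<exists>X. star_separator V E (sep_star V E c) S c X)"
proof -
  have "\<forall>S. S \<subseteq> V \<longrightarrow> (\<exists>X. star_separator V E (card V) S c X)"
    unfolding star_separator_def by (intro allI impI exI[of _ V]) simp
  thus ?thesis unfolding sep_star_def by (rule LeastI)
qed

lemma conn_reach:
  assumes "subgraph (fst H) (snd H) V E" "connected_graph (fst H) (snd H)"
    "X \<inter> fst H = {}" "u \<in> fst H" "w \<in> fst H"
  shows "reach_minus V E X u w"
proof -
  have "(\<lambda>x y. {x, y} \<in> snd H)\<^sup>*\<^sup>* u w" using assms(2,4,5) unfolding connected_graph_def by blast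
  moreover have "(\<lambda>x y. {x, y} \<in> snd H) \<le> (\<lambda>x y. x \<in> V - X \<and> y \<in> V - X \<and> {x, y} \<in> E)"
    using assms(1,3) unfolding subgraph_def by blast
  ultimately show ?thesis unfolding reach_minus_def using rtranclp_mono by blast
qed

theorem lemma8:
  fixes V :: "'a set" and E :: "'a set set" and c :: real
  assumes "graph V E" and "1/2 \<le> c" and "c < 1"
  shows "real (bramble_number V E) \<le> (1 / (1 - c)) * real (sep_star V E c)"
proof -
  have fV: "finite V" using assms(1) unfolding graph_def by blast
  obtain B where B: "bramble V E B" and bn: "bramble_number V E = bramble_order V B"
    using bn_attained[OF assms(1)] by blast
  obtain S where S: "hitting_set V B S" and cS: "card S = bramble_order V B"
    using order_attained[OF fV B] by blast
  define k where "k = sep_star V E c"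
  define m where "m = card S"
  have SV: "S \<subseteq> V" using S unfolding hitting_set_def by blast
  obtain X where X: "star_separator V E k S c X"
    using sep_star_prop[OF fV, of E c] SV unfolding k_def by blast
  have Xd: "X \<subseteq> V \<and> card X \<le> k \<and>
     (\<forall>v\<in>V - X. real (card (component_minus V E X v \<inter> (S - X))) \<le> c * real (card S))"
    using X unfolding star_separator_def .
  have XV: "X \<subseteq> V" and cX: "card X \<le> k" using Xd by simp_all
  have comp: "\<And>v. v \<in> V - X \<Longrightarrow> real (card (component_minus V E X v \<inter> (S - X))) \<le> c * real (card S)"
    using Xd by blast
  have pos: "0 < 1 - c" using assms(3) by simp
  have main: "real m * (1 - c) \<le> real k"
  proof (cases "\<forall>H\<in>B. X \<inter> fst H \<noteq> {}")
    case True
    hence "hitting_set V B X" using XV unfolding hitting_set_def by blast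
    hence "bramble_order V B \<le> card X" by (rule order_le[OF fV])
    hence "m \<le> k" using cX cS unfolding m_def by linarith
    moreover have "real m * (1 - c) \<le> real m" by (rule mult_left_le) (use assms(2) in auto)
    ultimately show ?thesis by linarith
  next
    case False
    then obtain H where H: "H \<in> B" "X \<inter> fst H = {}" by blast
    have Hs: "subgraph (fst H) (snd H) V E" "connected_graph (fst H) (snd H)"
      using B H(1) unfolding bramble_def by auto
    have "fst H \<noteq> {}" using Hs(2) unfolding connected_graph_def by (rule conjunct1)
    then obtain v where v: "v \<in> fst H" by blast
    have vVX: "v \<in> V - X" using v Hs(1) H(2) unfolding subgraph_def by blast
    define C where "C = component_minus V E X v"
    have inC: "fst H' \<subseteq> C" if H': "H' \<in> B" "X \<inter> fst H' = {}" for H'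
    proof
      fix w assume w: "w \<in> fst H'"
      have H's: "subgraph (fst H') (snd H') V E" "connected_graph (fst H') (snd H')"
        using B H'(1) unfolding bramble_def by auto
      have "touch E H H'" using B H(1) H'(1) unfolding bramble_def by blast
      hence "reach_minus V E X v w"
        unfolding touch_def
      proof
        assume "fst H \<inter> fst H' \<noteq> {}"
        then obtain a where a: "a \<in> fst H" "a \<in> fst H'" by blast
        have "reach_minus V E X v a" using conn_reach[OF Hs H(2) v a(1)] .
        moreover have "reach_minus V E X a w" using conn_reach[OF H's H'(2) a(2) w] .
        ultimately show ?thesis unfolding reach_minus_def by (rule rtranclp_trans)
      next
        assume "\<exists>a\<in>fst H. \<exists>b\<in>fst H'. {a, b} \<in> E"
        then obtain a b where ab: "a \<in> fst H" "b \<in> fst H'" "{a, b} \<in> E" by blast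
        have r1: "reach_minus V E X v a" using conn_reach[OF Hs H(2) v ab(1)] .
        have r3: "reach_minus V E X b w" using conn_reach[OF H's H'(2) ab(2) w] .
        have "a \<in> V - X" using ab(1) Hs(1) H(2) unfolding subgraph_def by blast
        moreover have "b \<in> V - X" using ab(2) H's(1) H'(2) unfolding subgraph_def by blast
        ultimately have r2: "reach_minus V E X a b" unfolding reach_minus_def
          by (rule r_into_rtranclp[where r="\<lambda>x y. x \<in> V - X \<and> y \<in> V - X \<and> {x, y} \<in> E", OF conjI[OF _ conjI[OF _ ab(3)]]])
        show ?thesis using r1 r2 r3 unfolding reach_minus_def by (meson rtranclp_trans)
      qed
      thus "w \<in> C" unfolding C_def component_minus_def by simp
    qed
    define Y where "Y = X \<union> (C \<inter> (S - X))"
    have "hitting_set V B Y"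
      unfolding hitting_set_def
    proof
      show "Y \<subseteq> V" using XV SV unfolding Y_def by blast
      show "\<forall>H\<in>B. Y \<inter> fst H \<noteq> {}"
      proof
        fix H' assume H': "H' \<in> B"
        show "Y \<inter> fst H' \<noteq> {}"
        proof (cases "X \<inter> fst H' = {}")
          case True
          have "fst H' \<subseteq> C" using inC[OF H' True] .
          moreover have "S \<inter> fst H' \<noteq> {}" using S H' unfolding hitting_set_def by blast
          ultimately show ?thesis using True unfolding Y_def by blast
        next
          case False thus ?thesis unfolding Y_def by blast
        qed
      qed
    qed
    hence "bramble_order V B \<le> card Y" by (rule order_le[OF fV])
    hence "m \<le> card Y" using cS unfolding m_def by linarith
    also have "card Y \<le> card X + card (C \<inter> (S - X))" unfolding Y_def by (rule card_Un_le)
    finally have "real m \<le> real (card X) + real (card (C \<inter> (S - X)))" by linarith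
    moreover have "real (card (C \<inter> (S - X))) \<le> c * real m" using comp[OF vVX] unfolding C_def m_def .
    moreover have "real (card X) \<le> real k" using cX by simp
    moreover have "real m * (1 - c) = real m - c * real m" by (simp add: algebra_simps)
    ultimately show ?thesis by linarith
  qed
  have "real (bramble_number V E) = real m" using bn cS unfolding m_def by simp
  also have "\<dots> \<le> real k / (1 - c)" by (subst pos_le_divide_eq[OF pos]) (rule main)
  also have "\<dots> = (1 / (1 - c)) * real (sep_star V E c)" unfolding k_def by simp
  finally show ?thesis .
qed

end
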